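(* Let $q$ be a prime power, $\ell,L$ integers with $1\le\ell\le q$ and $\ell\le L<\ell q$, and $r\in[0,1-\frac{\ell}{L+1})$ with $rn\in\mathbb{N}$. If $C\subseteq\mathbb{F}_q^n$ is a linear $(r,\ell,L)$ list-recoverable code of dimension at least $2$, then its minimum distance satisfies $d(C)>rn+\lfloor\frac{\ell}{L+1-\ell}rn\rfloor$.
   Context: A linear code is a subspace of $\mathbb{F}_q^n$; $d(C)$ is the minimum Hamming distance between distinct codewords. A code $C\subseteq\mathbb{F}_q^n$ is $(r,\ell,L)$ list-recoverable if for every sequence $S_1,\dots,S_n$ of subsets of $\mathbb{F}_q$ of size at most $\ell$, the number of $c\in C$ with $c_i\notin S_i$ for at most $rn$ coordinates $i$ is at most $L$. *)

theory Defs
  imports "HOL-Analysis.Analysis"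
begin

text \<open>Codes of length n over a finite field 'a (q = CARD('a)) are subsets of 'a ^ 'n, n = CARD('n).
Linear codes are subspaces w.r.t. the scalar multiplication (*s); dimension is vec.dim.\<close>

definition hamming_dist :: "'a ^ 'n \<Rightarrow> 'a ^ 'n \<Rightarrow> nat" where
  "hamming_dist x y = card {i. x $ i \<noteq> y $ i}"

definition min_dist :: "('a ^ 'n) set \<Rightarrow> nat" where
  "min_dist C = Min {hamming_dist x y | x y. x \<in> C \<and> y \<in> C \<and> x \<noteq> y}"

definition list_recoverable :: "('a ^ 'n::finite) set \<Rightarrow> real \<Rightarrow> nat \<Rightarrow> nat \<Rightarrow> bool" where
  "list_recoverable C r l L \<longleftrightarrow>
     (\<forall>S :: 'n \<Rightarrow> 'a set. (\<forall>i. card (S i) \<le> l) \<longrightarrow>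
        card {c \<in> C. real (card {i. c $ i \<notin> S i}) \<le> r * real CARD('n)} \<le> L)"

end

theory Submission
  imports Defs
begin

lemma cover_count:
  fixes d l m k :: nat
  assumes "0 < l" "l < m" "k < m"
  shows "d * l div m \<le> card {p. p < d \<and> (\<exists>u<l. (p * l + u) mod m = k)}"
proof -
  let ?P = "{p. p < d \<and> (\<exists>u<l. (p * l + u) mod m = k)}"
  let ?f = "\<lambda>j. (k + j * m) div l"
  have sub: "?f ` {..<d * l div m} \<subseteq> ?P"
  proof
    fix p assume "p \<in> ?f ` {..<d * l div m}"
    then obtain j where j: "j < d * l div m" and p: "p = (k + j * m) div l" by auto
    have "Suc j * m \<le> d * l div m * m" using j by (intro mult_right_mono) auto
    also have "\<dots> \<le> d * l" by (simp add: div_times_less_eq_dividend)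
    finally have lt: "k + j * m < d * l" using assms(3) by simp
    have "p < d" using lt p assms(1) by (simp add: div_less_iff_less_mult)
    moreover have "(p * l + (k + j * m) mod l) mod m = k"
      using p assms(3) by (simp add: div_mult_mod_eq)
    moreover have "(k + j * m) mod l < l" using assms(1) by simp
    ultimately show "p \<in> ?P" by blast
  qed
  have inj: "inj_on ?f {..<d * l div m}"
  proof (rule inj_onI)
    fix a b assume "a \<in> {..<d * l div m}" "b \<in> {..<d * l div m}" and e: "?f a = ?f b"
    show "a = b"
    proof (rule ccontr)
      assume "a \<noteq> b"
      then consider "a < b" | "b < a" by linarith
      then show False
      proof cases
        case 1
        have "k + a * m + l \<le> k + b * m"
        proof -
          have "a * m + m \<le> b * m" using 1 by (metis Suc_leI mult_Suc mult_le_mono1 add.commute)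
          thus ?thesis using assms(2) by linarith
        qed
        hence "(k + a * m + l) div l \<le> (k + b * m) div l" by (rule div_le_mono)
        moreover have "(k + a * m + l) div l = (k + a * m) div l + 1" using assms(1) by simp
        ultimately show False using e by simp
      next
        case 2
        have "k + b * m + l \<le> k + a * m"
        proof -
          have "b * m + m \<le> a * m" using 2 by (metis Suc_leI mult_Suc mult_le_mono1 add.commute)
          thus ?thesis using assms(2) by linarith
        qed
        hence "(k + b * m + l) div l \<le> (k + a * m) div l" by (rule div_le_mono)
        moreover have "(k + b * m + l) div l = (k + b * m) div l + 1" using assms(1) by simp
        ultimately show False using e by simp
      qed
    qed
  qed
  have "d * l div m = card (?f ` {..<d * l div m})" using card_image[OF inj] by simp
  also have "\<dots> \<le> card ?P" by (rule card_mono[OF _ sub]) auto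
  finally show ?thesis .
qed

theorem theorem6p3:
  fixes C :: "('a::{field,finite} ^ 'n::finite) set"
    and r :: real and l L :: nat
  assumes "1 \<le> l" and "l \<le> CARD('a)"
    and "l \<le> L" and "L < l * CARD('a)"
    and "0 \<le> r" and "r < 1 - real l / real (L + 1)"
    and "r * real CARD('n) \<in> \<nat>"
    and "vec.subspace C"
    and "vec.dim C \<ge> 2"
    and "list_recoverable C r l L"
  shows "real (min_dist C) > r * real CARD('n)
           + real_of_int \<lfloor>real l / real (L + 1 - l) * (r * real CARD('n))\<rfloor>"
proof (rule ccontr)
  define n where "n = CARD('n)"
  define q where "q = CARD('a)"
  define m where "m = L + 1"
  obtain t :: nat where t: "r * real CARD('n) = real t" using assms(7) by (metis Nats_cases)
  let ?D = "{hamming_dist x y | x y. x \<in> C \<and> y \<in> C \<and> x \<noteq> y}"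
  have Csub: "vec.subspace C" by fact
  have "\<not> C \<subseteq> vec.span {0}"
  proof
    assume "C \<subseteq> vec.span {0}"
    hence "vec.dim C \<le> card {0::'a^'n}" by (intro vec.dim_le_card) auto
    thus False using assms(9) by simp
  qed
  then obtain x0 where x0: "x0 \<in> C" "x0 \<noteq> 0" by (auto simp: vec.span_empty)
  have "0 \<in> C" using Csub by (rule vec.subspace_0)
  hence Dne: "?D \<noteq> {}" using x0 by blast
  have Dfin: "finite ?D"
  proof (rule finite_subset)
    show "?D \<subseteq> {..CARD('n)}" by (auto simp: hamming_dist_def card_mono)
  qed auto
  obtain x y where xy: "x \<in> C" "y \<in> C" "x \<noteq> y" "hamming_dist x y = min_dist C"
    using Min_in[OF Dfin Dne] unfolding min_dist_def by auto
  define c where "c = x - y"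
  define A where "A = {i. c $ i \<noteq> 0}"
  define d where "d = min_dist C"
  have cC: "c \<in> C" unfolding c_def using Csub xy by (intro vec.subspace_diff)
  have c0: "c \<noteq> 0" using xy unfolding c_def by simp
  have cardA: "card A = d" unfolding A_def d_def c_def using xy(4)
    by (simp add: hamming_dist_def)
  have "\<not> C \<subseteq> vec.span {c}"
  proof
    assume "C \<subseteq> vec.span {c}"
    hence "vec.dim C \<le> card {c}" by (intro vec.dim_le_card) auto
    thus False using assms(9) by simp
  qed
  then obtain c' where c'C: "c' \<in> C" and c'ns: "c' \<notin> vec.span {c}" by auto
  have indep: "a = a' \<and> b = b'" if "a *s c + b *s c' = a' *s c + b' *s c'" for a b a' b' :: 'a
  proof -
    have e: "(a - a') *s c = (b' - b) *s c'" using that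
      by (simp add: algebra_simps vec.scale_left_diff_distrib)
    have "b = b'"
    proof (rule ccontr)
      assume "b \<noteq> b'"
      hence "c' = ((a - a') / (b' - b)) *s c" using e
        by (metis (no_types, lifting) divide_inverse eq_iff_diff_eq_0 mult.commute right_inverse vec.scale_one vec.scale_scale)
      hence "c' \<in> vec.span {c}" by (auto simp: vec.span_singleton)
      thus False using c'ns by simp
    qed
    moreover have "a = a'" using e \<open>b = b'\<close> c0 by simp
    ultimately show ?thesis by simp
  qed
  obtain phi where phi: "bij_betw phi {0..<q} (UNIV :: 'a set)"
    using ex_bij_betw_nat_finite[of "UNIV :: 'a set"] unfolding q_def by auto
  obtain g where g: "bij_betw g {0..<d} A"
    using ex_bij_betw_nat_finite[of A] cardA by auto
  define blk where "blk = inv_into {0..<d} g"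
  define X where "X = (\<lambda>k. phi (k mod q) *s c + phi (k div q) *s c')"
  define S where "S = (\<lambda>i. if i \<in> A then (\<lambda>u. X ((blk i * l + u) mod m) $ i) ` {0..<l}
                              else (\<lambda>j. phi j * c' $ i) ` {0..<l})"
  have q0: "0 < q" unfolding q_def by simp
  have ml: "l < m" "m \<le> l * q" using assms unfolding m_def q_def by auto
  have l0: "0 < l" using assms by simp
  have Sc: "card (S i) \<le> l" for i unfolding S_def
    by (auto intro: card_image_le[THEN order_trans])
  have XC: "X k \<in> C" for k unfolding X_def using Csub cC c'C
    by (intro vec.subspace_add vec.subspace_scale) auto
  have Xinj: "inj_on X {0..<m}"
  proof (rule inj_onI)
    fix a b assume a: "a \<in> {0..<m}" and b: "b \<in> {0..<m}" and e: "X a = X b"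
    have "phi (a mod q) = phi (b mod q) \<and> phi (a div q) = phi (b div q)"
      using indep e unfolding X_def by blast
    moreover have "a div q < q" "b div q < q" using a b ml assms(2) q0
      by (auto simp: div_less_iff_less_mult q_def intro: less_le_trans)
    moreover have "a mod q < q" "b mod q < q" using q0 by auto
    ultimately have "a mod q = b mod q" "a div q = b div q"
      using bij_betw_imp_inj_on[OF phi] unfolding inj_on_def by auto
    thus "a = b" by (metis div_mult_mod_eq)
  qed
  assume neg: "\<not> ?thesis"
  have key: "d - d * l div m \<le> t"
  proof (cases "d \<le> t")
    case True thus ?thesis by simp
  next
    case False
    have Kle: "real_of_int \<lfloor>real l / real (L + 1 - l) * real t\<rfloor> \<le> real l / real (L + 1 - l) * real t"
      by (rule of_int_floor_le)
    have "real d \<le> real t + real l / real (L + 1 - l) * real t"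
    proof -
      have "real d \<le> real t + real_of_int \<lfloor>real l / real (L + 1 - l) * real t\<rfloor>"
        using neg unfolding d_def t by (simp only: not_less)
      thus ?thesis using add_left_mono[OF Kle, of "real t"] by (rule order_trans)
    qed
    have Lp: "real (L + 1 - l) = real L + 1 - real l" using assms(3) by simp
    have "(real d - real t) * real (L + 1 - l) \<le> real l * real t"
    proof -
      have "real d - real t \<le> real l * real t / real (L + 1 - l)"
        using \<open>real d \<le> _\<close> by simp
      moreover have "0 < real (L + 1 - l)" using assms(3) by simp
      ultimately show ?thesis by (simp add: pos_le_divide_eq)
    qed
    hence "(real d - real t) * real m \<le> real l * real d"
      unfolding Lp m_def by (simp add: algebra_simps)
    moreover have "real (d - t) = real d - real t" using False by simp
    ultimately have "real ((d - t) * m) \<le> real (l * d)" by simp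
    hence "(d - t) * m \<le> l * d" by (simp only: of_nat_le_iff)
    hence "d - t \<le> d * l div m" using ml
      by (simp add: less_eq_div_iff_mult_less_eq mult.commute)
    thus ?thesis by simp
  qed
  have err: "card {i. X k $ i \<notin> S i} \<le> t" if k: "k < m" for k
  proof -
    define P where "P = {p. p < d \<and> (\<exists>u<l. (p * l + u) mod m = k)}"
    have "{i. X k $ i \<notin> S i} \<subseteq> g ` ({0..<d} - P)"
    proof
      fix i assume i: "i \<in> {i. X k $ i \<notin> S i}"
      show "i \<in> g ` ({0..<d} - P)"
      proof (cases "i \<in> A")
        case False
        hence "c $ i = 0" unfolding A_def by simp
        hence "X k $ i = phi (k div q) * c' $ i" unfolding X_def by simp
        moreover have "k div q < l" using k ml q0
          by (simp add: div_less_iff_less_mult mult.commute)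
        ultimately have "X k $ i \<in> S i" using False unfolding S_def by auto
        thus ?thesis using i by simp
      next
        case True
        then obtain p where p: "p \<in> {0..<d}" "i = g p" using g by (auto simp: bij_betw_def)
        have bp: "blk i = p" unfolding blk_def p(2) using p(1) g
          by (simp add: bij_betw_def inv_into_f_f)
        have "p \<notin> P"
        proof
          assume "p \<in> P"
          then obtain u where "u < l" "(p * l + u) mod m = k" unfolding P_def by auto
          hence "X k $ i \<in> S i" using True bp unfolding S_def by force
          thus False using i by simp
        qed
        thus ?thesis using p by auto
      qed
    qed
    hence "card {i. X k $ i \<notin> S i} \<le> card (g ` ({0..<d} - P))" by (intro card_mono) auto
    also have "\<dots> \<le> card ({0..<d} - P)" by (rule card_image_le) auto
    also have "\<dots> = d - card P"
      by (subst card_Diff_subset) (auto simp: P_def)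
    also have "\<dots> \<le> d - d * l div m"
      using cover_count[OF l0 ml(1) k, of d] unfolding P_def by simp
    finally show ?thesis using key by simp
  qed
  have "X ` {0..<m} \<subseteq> {c \<in> C. real (card {i. c $ i \<notin> S i}) \<le> r * real CARD('n)}"
    using XC err t by auto
  hence "card (X ` {0..<m}) \<le> card {c \<in> C. real (card {i. c $ i \<notin> S i}) \<le> r * real CARD('n)}"
    by (intro card_mono) auto
  also have "\<dots> \<le> L" using assms(10) Sc unfolding list_recoverable_def by blast
  finally show False using card_image[OF Xinj] unfolding m_def by simp
qed

end
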